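(* Let $\bar n_s>0$, $\eta\in[0,1]$, $\bar n_B\ge0$, and $N=(1-\eta)\bar n_B$. Alice prepares a two-mode squeezed vacuum state $\sum_{k\ge0}\sqrt{\frac{\bar n_s^k}{(1+\bar n_s)^{k+1}}}|k\rangle_A|k\rangle_R$ and measures the reference mode $R$ with an on-off detector $c_i$. Under hypothesis $H_1$ the signal mode $A$ is sent through the lossy thermal-noise bosonic channel with transmittance $\eta$ and environment mean photon number $\bar n_B$ and then measured with an on-off detector $c_s$; under $H_0$ the signal is discarded and $c_s$ measures the channel output with vacuum input (a thermal state of mean photon number $N$). Let $p^{m}_{\mathrm{CC}}$ be the probability that both $c_i$ and $c_s$ click under $H_m$. Then $$p^0_{\mathrm{CC}}=\Big(1-\frac{1}{1+\bar n_s}\Big)\Big(1-\frac{1}{1+N}\Big),\qquad p^1_{\mathrm{CC}}\ge\Big(1-\frac{1}{1+\bar n_s}\Big)\Big(1-\frac{1}{1+N}+\frac{\eta}{(1+N)^2}\Big).$$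
   Context: An on-off detector clicks on a single-mode state $\hat\rho$ with probability $1-\langle0|\hat\rho|0\rangle$ and, upon clicking, projects onto the span of Fock states $|k\rangle$, $k\ge1$. The lossy thermal-noise bosonic channel with transmittance $\eta$ and environment mean photon number $\bar n_B$ is a beamsplitter of transmittance $\eta$ mixing the input mode with an environment mode in the thermal state $\sum_{k\ge0}\frac{\bar n_B^k}{(1+\bar n_B)^{k+1}}|k\rangle\langle k|$, with the environment output traced out. *)

theory Defs
  imports Complex_Main
begin

text \<open>Fock-basis amplitudes of the two-mode squeezed vacuum:
  |psi> = sum_k tmsv_amp ns k |k>_A |k>_R.\<close>
definition tmsv_amp :: "real \<Rightarrow> nat \<Rightarrow> real" where
  "tmsv_amp ns k = sqrt (ns ^ k / (1 + ns) ^ (k + 1))"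

definition thermal :: "real \<Rightarrow> nat \<Rightarrow> real" where
  "thermal nB k = nB ^ k / (1 + nB) ^ (k + 1)"

text \<open>Beamsplitter of transmittance eta acting on the input modes (signal a, environment b),
  given by the mode transformation
    a^dagger  ->  sqrt eta c^dagger + sqrt(1-eta) d^dagger,
    b^dagger  -> -sqrt(1-eta) c^dagger + sqrt eta d^dagger,
  where c is the channel output mode and d the environment output mode.
  bs_amp eta k j m n is the matrix element  <m|_c <n|_d U |k>_a |j>_b, obtained by expanding
  (a^dagger)^k (b^dagger)^j |0,0> / sqrt(k! j!) with the binomial theorem.\<close>
definition bs_amp :: "real \<Rightarrow> nat \<Rightarrow> nat \<Rightarrow> nat \<Rightarrow> nat \<Rightarrow> real" where
  "bs_amp eta k j m n =
     (if m + n = k + j then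
        sqrt (fact m * fact n / (fact k * fact j)) *
        (\<Sum>a\<le>k. \<Sum>b\<le>j. if a + b = m then
            real (k choose a) * real (j choose b) *
            sqrt eta ^ (a + (j - b)) * sqrt (1 - eta) ^ ((k - a) + b) * (-1) ^ b
          else 0)
      else 0)"

text \<open>Probability that the output of the lossy thermal-noise channel (transmittance eta,
  environment thermal with mean nB) is found in Fock state m (and the environment output in
  the photon-number-conserving state k + j - m, traced out), when the input is Fock state k:
  sum over the thermal environment photon number j.  Output photon numbers m with
  m > k + j have zero amplitude, so the inner sum over m \<ge> 1 is finite.\<close>
definition out_click_given :: "real \<Rightarrow> real \<Rightarrow> nat \<Rightarrow> real" where
  "out_click_given eta nB k =
     (\<Sum>j. thermal nB j * (\<Sum>m\<in>{1..k + j}. (bs_amp eta k j m (k + j - m))\<^sup>2))"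

text \<open>H1: the reference mode R is measured with an on-off detector (click = projection onto
  Fock states r \<ge> 1); since the TMSV is photon-number correlated, the signal mode is then in
  Fock state r, sent through the channel, and the output measured by an on-off detector.\<close>
definition pCC1 :: "real \<Rightarrow> real \<Rightarrow> real \<Rightarrow> real" where
  "pCC1 ns eta nB = (\<Sum>r. if 1 \<le> r then (tmsv_amp ns r)\<^sup>2 * out_click_given eta nB r else 0)"

text \<open>H0: the signal is discarded; R is in its reduced TMSV state, and the channel input is
  the vacuum (Fock state 0).\<close>
definition pCC0 :: "real \<Rightarrow> real \<Rightarrow> real \<Rightarrow> real" where
  "pCC0 ns eta nB = (\<Sum>r. if 1 \<le> r then (tmsv_amp ns r)\<^sup>2 * out_click_given eta nB 0 else 0)"

end

theory Submission
  imports Defs "HOL-Analysis.Analysis"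
begin
definition cc :: "real \<Rightarrow> real \<Rightarrow> nat \<Rightarrow> nat \<Rightarrow> nat \<Rightarrow> real" where
  "cc al be k j m = (\<Sum>a\<le>k. \<Sum>b\<le>j. if a + b = m then
            real (k choose a) * real (j choose b) *
            al ^ (a + (j - b)) * be ^ ((k - a) + b) * (-1) ^ b else 0)"

lemma gen1:
  "(\<Sum>m\<le>k+j. cc al be k j m * x ^ m) = (al * x + be) ^ k * (- be * x + al) ^ j"
proof -
  define T where "T a b = real (k choose a) * real (j choose b) *
            al ^ (a + (j - b)) * be ^ ((k - a) + b) * (-1) ^ b" for a b
  have "(\<Sum>m\<le>k+j. cc al be k j m * x ^ m) =
     (\<Sum>m\<le>k+j. \<Sum>a\<le>k. \<Sum>b\<le>j. if a + b = m then T a b * x ^ m else 0)"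
    unfolding cc_def sum_distrib_right T_def by (intro sum.cong refl) simp
  also have "\<dots> = (\<Sum>a\<le>k. \<Sum>b\<le>j. \<Sum>m\<le>k+j. if a + b = m then T a b * x ^ m else 0)"
    by (subst sum.swap, rule sum.cong[OF refl], rule sum.swap)
  also have "\<dots> = (\<Sum>a\<le>k. \<Sum>b\<le>j. T a b * x ^ (a + b))"
  proof (intro sum.cong refl)
    fix a b assume "a \<in> {..k}" "b \<in> {..j}"
    then have "a + b \<in> {..k+j}" by simp
    then show "(\<Sum>m\<le>k+j. if a + b = m then T a b * x ^ m else 0) = T a b * x ^ (a + b)"
      by (subst sum.delta') simp_all
  qed
  also have "\<dots> = (\<Sum>a\<le>k. \<Sum>b\<le>j. 
            (real (k choose a) * (al * x) ^ a * be ^ (k - a)) *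
            (real (j choose b) * (- be * x) ^ b * al ^ (j - b)))"
  proof (intro sum.cong refl)
    fix a b
    have e0: "- be * x = (-1) * be * x" by simp
    have e: "(- be * x) ^ b = (-1)^b * be ^ b * x ^ b"
      unfolding e0 by (simp only: power_mult_distrib)
    show "T a b * x ^ (a+b) =
        (real (k choose a) * (al * x) ^ a * be ^ (k - a)) *
            (real (j choose b) * (- be * x) ^ b * al ^ (j - b))"
      unfolding T_def e unfolding power_add[of al a] power_add[of be "k-a"] power_add[of x a] power_mult_distrib
      by (simp only: mult_ac)
  qed
  also have "\<dots> = (al * x + be) ^ k * (- be * x + al) ^ j"
    by (simp only: binomial_ring[of "al*x" be k] binomial_ring[of "- be * x" al j] sum_product)
  finally show ?thesis .
qed

definition rr :: "real \<Rightarrow> real \<Rightarrow> nat \<Rightarrow> nat \<Rightarrow> nat \<Rightarrow> real" where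
  "rr al be N k m = real (N choose k) * cc al be k (N - k) m"

lemma gen2:
  "(\<Sum>m\<le>N. (\<Sum>k\<le>N. rr al be N k m * y ^ k) * x ^ m) =
   (\<Sum>m\<le>N. (real (N choose m) * (al * y - be) ^ m * (be * y + al) ^ (N - m)) * x ^ m)"
proof -
  have "(\<Sum>m\<le>N. (\<Sum>k\<le>N. rr al be N k m * y ^ k) * x ^ m) =
     (\<Sum>k\<le>N. real (N choose k) * y ^ k * (\<Sum>m\<le>N. cc al be k (N - k) m * x ^ m))"
    unfolding rr_def sum_distrib_right sum_distrib_left
    by (subst sum.swap) (intro sum.cong refl, simp add: mult_ac)
  also have "\<dots> = (\<Sum>k\<le>N. real (N choose k) * (y * (al * x + be)) ^ k * (- be * x + al) ^ (N - k))"
  proof (intro sum.cong refl)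
    fix k assume "k \<in> {..N}"
    then have "(\<Sum>m\<le>N. cc al be k (N - k) m * x ^ m) = (al * x + be) ^ k * (- be * x + al) ^ (N - k)"
      using gen1[where k=k and j="N - k" and al=al and be=be and x=x] by simp
    then show "real (N choose k) * y ^ k * (\<Sum>m\<le>N. cc al be k (N - k) m * x ^ m) =
       real (N choose k) * (y * (al * x + be)) ^ k * (- be * x + al) ^ (N - k)"
      by (simp add: power_mult_distrib mult_ac)
  qed
  also have "\<dots> = (y * (al * x + be) + (- be * x + al)) ^ N"
    by (simp only: binomial_ring[of "y * (al * x + be)" "- be * x + al" N])
  also have "\<dots> = ((al * y - be) * x + (be * y + al)) ^ N"
    by (rule arg_cong[where f="\<lambda>u. u ^ N"]) (simp add: algebra_simps)
  also have "\<dots> = (\<Sum>m\<le>N. (real (N choose m) * (al * y - be) ^ m * (be * y + al) ^ (N - m)) * x ^ m)"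
    unfolding binomial_ring[of "(al * y - be) * x" "be * y + al" N]
    by (intro sum.cong refl) (simp only: power_mult_distrib mult_ac)
  finally show ?thesis .
qed

lemma gen3:
  assumes "m \<le> N"
  shows "(\<Sum>k\<le>N. rr al be N k m * y ^ k) = real (N choose m) * (al * y - be) ^ m * (be * y + al) ^ (N - m)"
proof -
  have "\<forall>x. (\<Sum>m\<le>N. (\<Sum>k\<le>N. rr al be N k m * y ^ k) * x ^ m) =
   (\<Sum>m\<le>N. (real (N choose m) * (al * y - be) ^ m * (be * y + al) ^ (N - m)) * x ^ m)"
    using gen2 by blast
  from polyfun_eq_coeffs[THEN iffD1, OF this] assms show ?thesis by blast
qed

lemma gen4:
  assumes "al^2 + be^2 = 1"
  shows "(\<Sum>m\<le>N. real (N choose m) * ((al * y - be) ^ m * (be * y + al) ^ (N - m)) *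
            ((al * z - be) ^ m * (be * z + al) ^ (N - m))) = (\<Sum>k\<le>N. real (N choose k) * (y * z) ^ k)"
proof -
  have "(\<Sum>m\<le>N. real (N choose m) * ((al * y - be) ^ m * (be * y + al) ^ (N - m)) *
            ((al * z - be) ^ m * (be * z + al) ^ (N - m))) =
        (\<Sum>m\<le>N. real (N choose m) * ((al * y - be) * (al * z - be)) ^ m * ((be * y + al) * (be * z + al)) ^ (N - m))"
    by (intro sum.cong refl) (simp add: power_mult_distrib mult_ac)
  also have "\<dots> = ((al * y - be) * (al * z - be) + (be * y + al) * (be * z + al)) ^ N"
    by (simp only: binomial_ring[of "(al * y - be) * (al * z - be)" "(be * y + al) * (be * z + al)" N])
  also have "(al * y - be) * (al * z - be) + (be * y + al) * (be * z + al) = (al^2 + be^2) * (y * z) + (al^2+be^2)"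
    by (simp add: algebra_simps power2_eq_square)
  also have "((al^2 + be^2) * (y * z) + (al^2+be^2)) ^ N = (y * z + 1) ^ N"
    using assms by simp
  also have "\<dots> = (\<Sum>k\<le>N. real (N choose k) * (y * z) ^ k)"
    unfolding binomial_ring[of "y * z" 1 N] by simp
  finally show ?thesis .
qed

lemma orth:
  assumes "al^2 + be^2 = 1" and "k \<le> N"
  shows "(\<Sum>m\<le>N. (rr al be N k m)^2 / real (N choose m)) = real (N choose k)"
proof -
  define Q where "Q m y = (al * y - be) ^ m * (be * y + al) ^ (N - m)" for m y
  have G: "\<And>m y. m \<le> N \<Longrightarrow> (\<Sum>k\<le>N. rr al be N k m * y ^ k) = real (N choose m) * Q m y"
    unfolding Q_def by (simp add: gen3 mult.assoc)
  have step1: "(\<Sum>k\<le>N. (\<Sum>m\<le>N. rr al be N k m * (\<Sum>k'\<le>N. rr al be N k' m * z ^ k') / real (N choose m)) * y ^ k)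
      = (\<Sum>k\<le>N. (real (N choose k) * z ^ k) * y ^ k)" for y z
  proof -
    have "(\<Sum>k\<le>N. (\<Sum>m\<le>N. rr al be N k m * (\<Sum>k'\<le>N. rr al be N k' m * z ^ k') / real (N choose m)) * y ^ k)
       = (\<Sum>m\<le>N. (\<Sum>k\<le>N. rr al be N k m * y ^ k) * (\<Sum>k'\<le>N. rr al be N k' m * z ^ k') / real (N choose m))"
      unfolding sum_distrib_right sum_divide_distrib
      by (subst sum.swap) (intro sum.cong refl, simp add: mult_ac)
    also have "\<dots> = (\<Sum>m\<le>N. real (N choose m) * Q m y * Q m z)"
      by (intro sum.cong refl) (simp add: G)
    also have "\<dots> = (\<Sum>k\<le>N. real (N choose k) * (y * z) ^ k)"
      using gen4[OF assms(1), of N y z] unfolding Q_def by (simp add: mult.assoc)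
    also have "\<dots> = (\<Sum>k\<le>N. (real (N choose k) * z ^ k) * y ^ k)"
      by (simp add: power_mult_distrib mult_ac)
    finally show ?thesis .
  qed
  have step2: "(\<Sum>m\<le>N. rr al be N k m * (\<Sum>k'\<le>N. rr al be N k' m * z ^ k') / real (N choose m)) = real (N choose k) * z ^ k" for z
  proof -
    have "\<forall>y. (\<Sum>k\<le>N. (\<Sum>m\<le>N. rr al be N k m * (\<Sum>k'\<le>N. rr al be N k' m * z ^ k') / real (N choose m)) * y ^ k)
      = (\<Sum>k\<le>N. (real (N choose k) * z ^ k) * y ^ k)" using step1 by blast
    from polyfun_eq_coeffs[THEN iffD1, OF this] assms(2) show ?thesis by blast
  qed
  have step3: "(\<Sum>k'\<le>N. (\<Sum>m\<le>N. rr al be N k m * rr al be N k' m / real (N choose m)) * z ^ k')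
      = (\<Sum>k'\<le>N. (if k' = k then real (N choose k) else 0) * z ^ k')" for z
  proof -
    have "(\<Sum>k'\<le>N. (\<Sum>m\<le>N. rr al be N k m * rr al be N k' m / real (N choose m)) * z ^ k')
       = (\<Sum>m\<le>N. rr al be N k m * (\<Sum>k'\<le>N. rr al be N k' m * z ^ k') / real (N choose m))"
      unfolding sum_distrib_right sum_divide_distrib sum_distrib_left
      by (subst sum.swap) (intro sum.cong refl, simp add: mult_ac)
    also have "\<dots> = real (N choose k) * z ^ k" by (rule step2)
    also have "\<dots> = (\<Sum>k'\<le>N. if k = k' then real (N choose k) * z ^ k' else 0)"
      using assms(2) by simp
    also have "\<dots> = (\<Sum>k'\<le>N. (if k' = k then real (N choose k) else 0) * z ^ k')"
      by (intro sum.cong refl) auto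
    finally show ?thesis .
  qed
  have "(\<Sum>m\<le>N. rr al be N k m * rr al be N k m / real (N choose m)) = (if k = k then real (N choose k) else 0)"
  proof -
    have "\<forall>z. (\<Sum>k'\<le>N. (\<Sum>m\<le>N. rr al be N k m * rr al be N k' m / real (N choose m)) * z ^ k')
      = (\<Sum>k'\<le>N. (if k' = k then real (N choose k) else 0) * z ^ k')" using step3 by blast
    from polyfun_eq_coeffs[THEN iffD1, OF this] assms(2) show ?thesis by blast
  qed
  then show ?thesis by (simp add: power2_eq_square)
qed

lemma bs_sq:
  assumes "0 \<le> eta" "eta \<le> 1" "m \<le> k + j"
  shows "(bs_amp eta k j m (k + j - m))^2 =
     (rr (sqrt eta) (sqrt (1 - eta)) (k+j) k m)^2 / real ((k+j) choose m) / real ((k+j) choose k)"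
proof -
  have pos: "0 \<le> fact m * fact (k + j - m) / (fact k * fact j :: real)" by simp
  have "(bs_amp eta k j m (k + j - m))^2 = fact m * fact (k + j - m) / (fact k * fact j) * (cc (sqrt eta) (sqrt (1 - eta)) k j m)^2"
    unfolding bs_amp_def cc_def using assms(3) pos by (simp add: power_mult_distrib)
  also have "\<dots> = (rr (sqrt eta) (sqrt (1 - eta)) (k+j) k m)^2 / real ((k+j) choose m) / real ((k+j) choose k)"
    unfolding rr_def using assms(3)
    by (simp add: binomial_fact power_mult_distrib field_simps power2_eq_square)
  finally show ?thesis .
qed

lemma cc0: "cc al be k j 0 = al ^ j * be ^ k"
proof -
  have "cc al be k j 0 = (\<Sum>a\<le>k. if a = 0 then (\<Sum>b\<le>j. if b = 0 then al ^ j * be ^ k else 0) else 0)"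
    unfolding cc_def by (intro sum.cong refl) auto
  also have "\<dots> = al ^ j * be ^ k"
    by (simp add: sum.If_cases)
  finally show ?thesis .
qed

lemma bs_unit:
  assumes "0 \<le> eta" "eta \<le> 1"
  shows "(\<Sum>m\<in>{1..k + j}. (bs_amp eta k j m (k + j - m))^2) = 1 - real ((k+j) choose k) * eta ^ j * (1 - eta) ^ k"
proof -
  let ?al = "sqrt eta" and ?be = "sqrt (1 - eta)"
  have ab: "?al^2 + ?be^2 = 1" using assms by simp
  have Ck: "real ((k+j) choose k) > 0" by simp
  have tot: "(\<Sum>m\<le>k+j. (bs_amp eta k j m (k + j - m))^2) = 1"
  proof -
    have "(\<Sum>m\<le>k+j. (bs_amp eta k j m (k + j - m))^2) =
        (\<Sum>m\<le>k+j. (rr ?al ?be (k+j) k m)^2 / real ((k+j) choose m)) / real ((k+j) choose k)"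
      unfolding sum_divide_distrib using assms by (intro sum.cong refl) (simp add: bs_sq)
    also have "\<dots> = 1" using orth[OF ab, of k "k+j"] Ck by simp
    finally show ?thesis .
  qed
  have z: "(bs_amp eta k j 0 (k + j))^2 = real ((k+j) choose k) * eta ^ j * (1 - eta) ^ k"
  proof -
    have "(bs_amp eta k j 0 (k + j))^2 = fact (k+j) / (fact k * fact j) * (cc ?al ?be k j 0)^2"
      unfolding bs_amp_def cc_def by (simp add: power_mult_distrib)
    also have "\<dots> = real ((k+j) choose k) * eta ^ j * (1 - eta) ^ k"
    proof -
      have p1: "(sqrt eta ^ j)^2 = eta ^ j" using assms by (metis power_mult mult.commute real_sqrt_pow2)
      have p2: "(sqrt (1-eta) ^ k)^2 = (1-eta) ^ k"
        using assms power_mult mult.commute real_sqrt_pow2[of "1-eta"] by (metis diff_ge_0_iff_ge)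
      show ?thesis unfolding cc0 power_mult_distrib[of "sqrt eta ^ j"] p1 p2
        by (simp add: binomial_fact)
    qed
    finally show ?thesis .
  qed
  have "{..k+j} = insert 0 {1..k+j}" by auto
  then have "(\<Sum>m\<le>k+j. (bs_amp eta k j m (k + j - m))^2) = (bs_amp eta k j 0 (k + j))^2 + (\<Sum>m\<in>{1..k + j}. (bs_amp eta k j m (k + j - m))^2)"
    by simp
  then show ?thesis using tot z by simp
qed

lemma negbin:
  fixes x :: real
  assumes "0 \<le> x" "x < 1"
  shows "(\<lambda>j. real ((k + j) choose j) * x ^ j) sums (1 / (1 - x) ^ (k + 1))"
proof -
  have "\<bar>- x\<bar> < 1" using assms by simp
  from gen_binomial_real[OF this, of "- (real k + 1)"]
  have S: "(\<lambda>n. ((- (real k + 1)) gchoose n) * (- x) ^ n) sums (1 + - x) powr (- (real k + 1))" .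
  have "((- (real k + 1)) gchoose n) * (- x) ^ n = real ((k + n) choose n) * x ^ n" for n
  proof -
    have "((- (real k + 1)) gchoose n) = (-1) ^ n * ((real k + 1 + real n - 1) gchoose n)"
      by (rule gbinomial_minus)
    also have "real k + 1 + real n - 1 = real (k + n)" by simp
    also have "(real (k + n) gchoose n) = real ((k + n) choose n)" by (simp add: binomial_gbinomial)
    finally have g: "((- (real k + 1)) gchoose n) = (-1) ^ n * real ((k + n) choose n)" .
    have "(-1::real) ^ n * (- x) ^ n = x ^ n" by (simp flip: power_mult_distrib)
    then show ?thesis unfolding g by (metis mult.assoc mult.commute)
  qed
  moreover have "(1 + - x) powr (- (real k + 1)) = 1 / (1 - x) ^ (k + 1)"
  proof -
    have p: "0 < 1 - x" using assms by simp
    have "(1 + - x) powr (- (real k + 1)) = (1 - x) powr (- real (Suc k))"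
      by (rule arg_cong2[where f="(powr)"]) simp_all
    also have "\<dots> = inverse ((1 - x) powr real (Suc k))" by (rule powr_minus)
    also have "\<dots> = inverse ((1 - x) ^ (Suc k))" by (simp only: powr_realpow[OF p])
    finally show ?thesis by (simp add: inverse_eq_divide)
  qed
  ultimately show ?thesis using S by simp
qed

lemma thermal_sums:
  assumes "nB \<ge> 0"
  shows "thermal nB sums 1"
proof -
  have q: "norm (nB / (1 + nB)) < 1" using assms by simp
  have "(\<lambda>j. (nB / (1 + nB)) ^ j * (1 / (1 + nB))) sums (1 / (1 - nB / (1 + nB)) * (1 / (1 + nB)))"
    by (rule sums_mult2[OF geometric_sums[OF q]])
  moreover have "1 / (1 - nB / (1 + nB)) * (1 / (1 + nB)) = 1" using assms by (simp add: field_simps)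
  moreover have "(\<lambda>j. (nB / (1 + nB)) ^ j * (1 / (1 + nB))) = thermal nB"
    by (rule ext) (simp add: thermal_def power_divide)
  ultimately show ?thesis by simp
qed

lemma thermal_nb_sums:
  assumes "nB \<ge> 0" "0 \<le> eta" "eta \<le> 1"
  shows "(\<lambda>j. thermal nB j * (real ((k + j) choose k) * eta ^ j * (1 - eta) ^ k)) sums
         (((1 - eta) * (1 + nB)) ^ k / (1 + (1 - eta) * nB) ^ (k + 1))"
proof -
  define x where "x = eta * nB / (1 + nB)"
  have x0: "0 \<le> x" using assms by (simp add: x_def)
  have "eta * nB \<le> nB" using assms by (simp add: mult_left_le_one_le)
  then have x1: "x < 1" unfolding x_def using assms
    by (simp add: divide_less_eq)
  have "(\<lambda>j. real ((k + j) choose j) * x ^ j * ((1 - eta) ^ k / (1 + nB))) sums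
        (1 / (1 - x) ^ (k + 1) * ((1 - eta) ^ k / (1 + nB)))"
    by (rule sums_mult2[OF negbin[OF x0 x1]])
  moreover have "(\<lambda>j. real ((k + j) choose j) * x ^ j * ((1 - eta) ^ k / (1 + nB))) =
     (\<lambda>j. thermal nB j * (real ((k + j) choose k) * eta ^ j * (1 - eta) ^ k))"
  proof (rule ext)
    fix j
    have "real ((k + j) choose j) = real ((k + j) choose k)"
      by (metis binomial_symmetric add_diff_cancel_left' le_add1 add.commute)
    then show "real ((k + j) choose j) * x ^ j * ((1 - eta) ^ k / (1 + nB)) =
       thermal nB j * (real ((k + j) choose k) * eta ^ j * (1 - eta) ^ k)"
      unfolding thermal_def x_def using assms
      by (simp add: power_divide power_mult_distrib field_simps)
  qed
  moreover have "1 / (1 - x) ^ (k + 1) * ((1 - eta) ^ k / (1 + nB)) =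
       ((1 - eta) * (1 + nB)) ^ k / (1 + (1 - eta) * nB) ^ (k + 1)"
  proof -
    have "1 - x = (1 + (1 - eta) * nB) / (1 + nB)" unfolding x_def using assms
      by (simp add: field_simps)
    then have "1 / (1 - x) ^ (k + 1) = (1 + nB) ^ (k + 1) / (1 + (1 - eta) * nB) ^ (k + 1)"
      by (simp add: power_divide)
    moreover have "(1 + nB) ^ (k + 1) / (1 + (1 - eta) * nB) ^ (k + 1) * ((1 - eta) ^ k / (1 + nB)) =
        ((1 - eta) * (1 + nB)) ^ k / (1 + (1 - eta) * nB) ^ (k + 1)"
      using assms by (simp add: power_mult_distrib)
    ultimately show ?thesis by simp
  qed
  ultimately show ?thesis by simp
qed

lemma out_click:
  assumes "nB \<ge> 0" "0 \<le> eta" "eta \<le> 1"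
  shows "out_click_given eta nB k = 1 - ((1 - eta) * (1 + nB)) ^ k / (1 + (1 - eta) * nB) ^ (k + 1)"
proof -
  have "(\<lambda>j. thermal nB j - thermal nB j * (real ((k + j) choose k) * eta ^ j * (1 - eta) ^ k)) sums
        (1 - ((1 - eta) * (1 + nB)) ^ k / (1 + (1 - eta) * nB) ^ (k + 1))"
    by (rule sums_diff[OF thermal_sums[OF assms(1)] thermal_nb_sums[OF assms]])
  moreover have "(\<lambda>j. thermal nB j - thermal nB j * (real ((k + j) choose k) * eta ^ j * (1 - eta) ^ k)) =
     (\<lambda>j. thermal nB j * (\<Sum>m\<in>{1..k + j}. (bs_amp eta k j m (k + j - m))\<^sup>2))"
    by (rule ext) (subst bs_unit[OF assms(2,3)], simp add: algebra_simps)
  ultimately have "(\<lambda>j. thermal nB j * (\<Sum>m\<in>{1..k + j}. (bs_amp eta k j m (k + j - m))\<^sup>2)) sums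
        (1 - ((1 - eta) * (1 + nB)) ^ k / (1 + (1 - eta) * nB) ^ (k + 1))" by simp
  then show ?thesis unfolding out_click_given_def by (rule sums_unique[symmetric])
qed

lemma tmsv_sq: "ns \<ge> 0 \<Longrightarrow> (tmsv_amp ns r)^2 = ns ^ r / (1 + ns) ^ (r + 1)"
  unfolding tmsv_amp_def by simp

lemma tmsv_tail:
  assumes "ns > 0"
  shows "(\<lambda>r. if 1 \<le> r then (tmsv_amp ns r)^2 else 0) sums (1 - 1 / (1 + ns))"
proof -
  have A: "(\<lambda>r. (tmsv_amp ns r)^2) sums 1"
  proof -
    have "(\<lambda>r. (tmsv_amp ns r)^2) = thermal ns"
      using assms by (intro ext) (simp add: tmsv_sq thermal_def)
    then show ?thesis using thermal_sums[of ns] assms by simp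
  qed
  have B: "(\<lambda>r. if r = 0 then (tmsv_amp ns r)^2 else 0) sums (tmsv_amp ns 0)^2"
    by (rule sums_single)
  have "(\<lambda>r. (tmsv_amp ns r)^2 - (if r = 0 then (tmsv_amp ns r)^2 else 0)) sums (1 - (tmsv_amp ns 0)^2)"
    by (rule sums_diff[OF A B])
  moreover have "(\<lambda>r. (tmsv_amp ns r)^2 - (if r = 0 then (tmsv_amp ns r)^2 else 0)) =
     (\<lambda>r. if 1 \<le> r then (tmsv_amp ns r)^2 else 0)" by (rule ext) auto
  moreover have "(tmsv_amp ns 0)^2 = 1 / (1 + ns)" using assms by (simp add: tmsv_sq)
  ultimately show ?thesis by simp
qed

theorem mainTheorem4:
  fixes ns eta nB N :: real
  assumes "ns > 0" and "0 \<le> eta" and "eta \<le> 1" and "nB \<ge> 0"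
    and "N = (1 - eta) * nB"
  shows "pCC0 ns eta nB = (1 - 1 / (1 + ns)) * (1 - 1 / (1 + N)) \<and>
         pCC1 ns eta nB \<ge> (1 - 1 / (1 + ns)) * (1 - 1 / (1 + N) + eta / (1 + N)^2)"
proof
  have N0: "N \<ge> 0" using assms by simp
  have o0: "out_click_given eta nB 0 = 1 - 1 / (1 + N)"
    using out_click[OF assms(4,2,3), of 0] assms(5) by simp
  have T: "(\<lambda>r. if 1 \<le> r then (tmsv_amp ns r)^2 else 0) sums (1 - 1 / (1 + ns))"
    by (rule tmsv_tail[OF assms(1)])
  have "(\<lambda>r. (if 1 \<le> r then (tmsv_amp ns r)^2 else 0) * (1 - 1 / (1 + N))) sums
         ((1 - 1 / (1 + ns)) * (1 - 1 / (1 + N)))"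
    by (rule sums_mult2[OF T])
  moreover have "(\<lambda>r. (if 1 \<le> r then (tmsv_amp ns r)^2 else 0) * (1 - 1 / (1 + N))) =
     (\<lambda>r. if 1 \<le> r then (tmsv_amp ns r)\<^sup>2 * out_click_given eta nB 0 else 0)"
    by (rule ext) (simp add: o0)
  ultimately have "(\<lambda>r. if 1 \<le> r then (tmsv_amp ns r)\<^sup>2 * out_click_given eta nB 0 else 0) sums
       ((1 - 1 / (1 + ns)) * (1 - 1 / (1 + N)))" by simp
  then show "pCC0 ns eta nB = (1 - 1 / (1 + ns)) * (1 - 1 / (1 + N))"
    unfolding pCC0_def by (rule sums_unique[symmetric])
next
  have N0: "N \<ge> 0" using assms by simp
  define c where "c = 1 - 1 / (1 + N) + eta / (1 + N)^2"
  define t where "t = (1 - eta) * (1 + nB) / (1 + N)"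
  have t0: "0 \<le> t" using assms N0 by (simp add: t_def)
  have "(1 - eta) * (1 + nB) = 1 + N - eta" using assms by (simp add: algebra_simps)
  then have t1: "t \<le> 1" unfolding t_def using N0 assms(2) by (simp add: divide_le_eq)
  have oc: "out_click_given eta nB r = 1 - t ^ r / (1 + N)" for r
    using out_click[OF assms(4,2,3), of r] assms(5) N0 by (simp add: t_def power_divide)
  have ge: "c \<le> out_click_given eta nB r" if "1 \<le> r" for r
  proof -
    have "t ^ r \<le> t" using power_decreasing[of 1 r t] t0 t1 that by simp
    then have "t ^ r / (1 + N) \<le> t / (1 + N)" using N0 by (simp add: divide_right_mono)
    moreover have "t / (1 + N) = 1 / (1 + N) - eta / (1 + N)^2"
    proof -
      have "t / (1 + N) = (1 + N - eta) / (1 + N)^2" unfolding t_def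
        using \<open>(1 - eta) * (1 + nB) = 1 + N - eta\<close> by (simp add: power2_eq_square)
      also have "\<dots> = 1 / (1 + N) - eta / (1 + N)^2"
      proof -
        have nz: "1 + N \<noteq> 0" using N0 by simp
        have "(1 + N) / (1 + N)^2 = 1 / (1 + N)" using nz by (simp add: power2_eq_square)
        then show ?thesis by (simp add: diff_divide_distrib)
      qed
      finally show ?thesis .
    qed
    ultimately show ?thesis unfolding oc c_def by simp
  qed
  have le1: "out_click_given eta nB r \<le> 1" for r
    unfolding oc using t0 N0 by simp
  have T: "(\<lambda>r. if 1 \<le> r then (tmsv_amp ns r)^2 else 0) sums (1 - 1 / (1 + ns))"
    by (rule tmsv_tail[OF assms(1)])
  have S1: "(\<lambda>r. (if 1 \<le> r then (tmsv_amp ns r)^2 else 0) * c) sums ((1 - 1 / (1 + ns)) * c)"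
    by (rule sums_mult2[OF T])
  have c0: "0 \<le> c"
  proof -
    have "1 / (1 + N) \<le> 1" using N0 by simp
    moreover have "0 \<le> eta / (1 + N)^2" using assms(2) by simp
    ultimately show ?thesis unfolding c_def by linarith
  qed
  have sm: "summable (\<lambda>r. if 1 \<le> r then (tmsv_amp ns r)\<^sup>2 * out_click_given eta nB r else 0)"
  proof (rule summable_comparison_test[OF _ sums_summable[OF T]])
    show "\<exists>N. \<forall>n\<ge>N. norm (if 1 \<le> n then (tmsv_amp ns n)\<^sup>2 * out_click_given eta nB n else 0)
        \<le> (if 1 \<le> n then (tmsv_amp ns n)^2 else 0)"
    proof (intro exI allI impI)
      fix n :: nat
      show "norm (if 1 \<le> n then (tmsv_amp ns n)\<^sup>2 * out_click_given eta nB n else 0)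
        \<le> (if 1 \<le> n then (tmsv_amp ns n)^2 else 0)"
      proof (cases "1 \<le> n")
        case True
        have "0 \<le> out_click_given eta nB n" using ge[OF True] c0 by simp
        then show ?thesis using True le1[of n]
          by (simp add: abs_mult mult_left_le)
      qed simp
    qed
  qed
  have "(1 - 1 / (1 + ns)) * c = (\<Sum>r. (if 1 \<le> r then (tmsv_amp ns r)^2 else 0) * c)"
    using S1 by (rule sums_unique)
  also have "\<dots> \<le> (\<Sum>r. if 1 \<le> r then (tmsv_amp ns r)\<^sup>2 * out_click_given eta nB r else 0)"
  proof (rule suminf_le[OF _ sums_summable[OF S1] sm])
    fix n show "(if 1 \<le> n then (tmsv_amp ns n)^2 else 0) * c \<le>
        (if 1 \<le> n then (tmsv_amp ns n)\<^sup>2 * out_click_given eta nB n else 0)"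
      using ge[of n] by (simp add: mult_left_mono)
  qed
  finally show "pCC1 ns eta nB \<ge> (1 - 1 / (1 + ns)) * (1 - 1 / (1 + N) + eta / (1 + N)^2)"
    unfolding pCC1_def c_def .
qed

end
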